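(* Let $I \subset \mathbb{R}$ be an interval (open or closed), let $d$ be an orderly metric on $\mathbb{R}$, and let $f \colon (I,d) \to (\mathbb{R},d)$ be an $(M,\epsilon)$-quasi-isometric embedding. Then $f$ is $2\epsilon M$-monotone relative to $d$, and for all $a,b \in I$ the set $f([a,b])$ is $\epsilon$-dense in $[f(a),f(b)]$, i.e. $\inf_{x \in [a,b]} d(y,f(x)) \leq \epsilon$ for every $y \in [f(a),f(b)]$.
   Context: A map $f \colon (X,d) \to (Y,d')$ is an $(M,\epsilon)$-quasi-isometric embedding if $M^{-1}d(x,y) - \epsilon \leq d'(f(x),f(y)) \leq Md(x,y) + \epsilon$ for all $x,y \in X$. A metric $d$ on $\mathbb{R}$ is orderly if the identity $(\mathbb{R},|\cdot|) \to (\mathbb{R},d)$ is continuous and $\max\{d(x,y),d(y,z)\} \leq d(x,z)$ whenever $x \leq y \leq z$. For $E \subset \mathbb{R}$ and $\delta > 0$, a map $f \colon E \to \mathbb{R}$ is $\delta$-monotone relative to $d$ if either $f(a) < f(b)$ for all $a,b \in E$ with $a < b$ and $d(a,b) > \delta$, or $f(a) > f(b)$ for all such $a,b$. Here $[u,v] = \{x : u \leq x \leq v\}$. *)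

theory Defs
  imports "HOL-Analysis.Analysis"
begin

definition orderly :: "(real \<Rightarrow> real \<Rightarrow> real) \<Rightarrow> bool" where
  "orderly d \<longleftrightarrow>
     Metric_space UNIV d \<and>
     continuous_map euclideanreal (Metric_space.mtopology UNIV d) id \<and>
     (\<forall>x y z. x \<le> y \<and> y \<le> z \<longrightarrow> max (d x y) (d y z) \<le> d x z)"

definition qi_embedding ::
  "real \<Rightarrow> real \<Rightarrow> ('a \<Rightarrow> 'a \<Rightarrow> real) \<Rightarrow> 'a set \<Rightarrow> ('b \<Rightarrow> 'b \<Rightarrow> real) \<Rightarrow> ('a \<Rightarrow> 'b) \<Rightarrow> bool" where
  "qi_embedding M eps d X d' f \<longleftrightarrow>
     (\<forall>x\<in>X. \<forall>y\<in>X. d x y / M - eps \<le> d' (f x) (f y) \<and> d' (f x) (f y) \<le> M * d x y + eps)"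

definition delta_monotone ::
  "(real \<Rightarrow> real \<Rightarrow> real) \<Rightarrow> real \<Rightarrow> real set \<Rightarrow> (real \<Rightarrow> real) \<Rightarrow> bool" where
  "delta_monotone d \<delta> E f \<longleftrightarrow>
     (\<forall>a\<in>E. \<forall>b\<in>E. a < b \<and> d a b > \<delta> \<longrightarrow> f a < f b) \<or>
     (\<forall>a\<in>E. \<forall>b\<in>E. a < b \<and> d a b > \<delta> \<longrightarrow> f a > f b)"

end

theory Submission
  imports Defs
begin

lemma G0:
  fixes g :: "real \<Rightarrow> real" and dd D :: "real \<Rightarrow> real \<Rightarrow> real"
  assumes vw: "v \<le> w" and gv: "g v \<le> c" and gw: "c \<le> g w"
    and cont: "\<And>s r. r > 0 \<Longrightarrow> \<exists>e>0. \<forall>x. \<bar>x - s\<bar> < e \<longrightarrow> dd s x < r"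
    and sym: "\<And>x y. dd x y = dd y x"
    and Dsym: "\<And>x y. D x y = D y x"
    and D0: "\<And>x. D x x = 0"
    and qi: "\<And>x y. x \<in> {v..w} \<Longrightarrow> y \<in> {v..w} \<Longrightarrow> D (g x) (g y) \<le> M * dd x y + eps"
    and ord: "\<And>x y z. x \<le> y \<Longrightarrow> y \<le> z \<Longrightarrow> max (D x y) (D y z) \<le> D x z"
    and M: "M > 0" and r: "r > 0" and eps: "eps \<ge> 0"
  shows "\<exists>t\<in>{v..w}. D c (g t) < eps + r"
proof -
  define L where "L = {x\<in>{v..w}. g x \<le> c}"
  define s where "s = Sup L"
  have vL: "v \<in> L" using vw gv by (auto simp: L_def)
  have bdd: "bdd_above L" unfolding L_def by (rule bdd_aboveI[of _ w]) auto
  have sv: "v \<le> s" unfolding s_def using vL bdd by (rule cSup_upper)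
  have sw: "s \<le> w" unfolding s_def using vL by (intro cSup_least) (auto simp: L_def)
  obtain e where e: "e > 0" "\<And>x. \<bar>x - s\<bar> < e \<Longrightarrow> dd s x < r / M"
    using cont[of "r/M"] r M by auto
  show ?thesis
  proof (cases "g s \<le> c")
    case True
    show ?thesis
    proof (cases "s = w")
      case True
      with \<open>g s \<le> c\<close> gw have "c = g w" by simp
      then show ?thesis using D0 r eps vw by (intro bexI[of _ w]) auto
    next
      case False
      with sw have sw': "s < w" by simp
      define x' where "x' = min w (s + e/2)"
      have x's: "x' > s" using sw' e by (simp add: x'_def)
      have x'in: "x' \<in> {v..w}" using sv x's sw' by (auto simp: x'_def)
      have "x' \<notin> L" using x's bdd unfolding s_def by (meson cSup_upper not_le)
      hence gx': "g x' > c" using x'in by (auto simp: L_def)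
      have "\<bar>x' - s\<bar> < e" using x's e by (simp add: x'_def)
      hence dd: "dd s x' < r / M" by (rule e(2))
      have "D c (g s) = D (g s) c" by (rule Dsym)
      also have "\<dots> \<le> D (g s) (g x')" using ord[of "g s" c "g x'"] True gx' by simp
      also have "\<dots> \<le> M * dd s x' + eps" using qi[of s x'] sv sw x'in by auto
      also have "\<dots> < eps + r" using dd M by (simp add: field_simps)
      finally show ?thesis using sv sw by auto
    qed
  next
    case False
    hence "s \<noteq> v" using gv by auto
    have "s - e < Sup L" using e unfolding s_def by simp
    then obtain x where xL: "x \<in> L" and xgt: "s - e < x"
      using vL less_cSup_iff[OF _ bdd, of "s - e"] by blast
    have xs: "x \<le> s" unfolding s_def using xL bdd by (rule cSup_upper)
    have xin: "x \<in> {v..w}" and gx: "g x \<le> c" using xL by (auto simp: L_def)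
    have "\<bar>x - s\<bar> < e" using xs xgt by simp
    hence dd: "dd s x < r / M" by (rule e(2))
    have "D c (g x) = D (g x) c" by (rule Dsym)
    also have "\<dots> \<le> D (g x) (g s)" using ord[of "g x" c "g s"] False gx by simp
    also have "\<dots> \<le> M * dd x s + eps" using qi[of x s] sv sw xin by auto
    also have "\<dots> < eps + r" using dd M sym[of x s] by (simp add: field_simps)
    finally show ?thesis using xin by auto
  qed
qed

theorem lemma3p10:
  fixes I :: "real set" and d :: "real \<Rightarrow> real \<Rightarrow> real" and f :: "real \<Rightarrow> real"
    and M eps :: real
  assumes "is_interval I" and "open I \<or> closed I"
    and "orderly d"
    and "M \<ge> 1" and "eps \<ge> 0"
    and "qi_embedding M eps d I d f"
  shows "delta_monotone d (2 * eps * M) I f \<and>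
    (\<forall>a\<in>I. \<forall>b\<in>I. a \<le> b \<longrightarrow>
       (\<forall>y\<in>{f a..f b}. (INF x\<in>{a..b}. d y (f x)) \<le> eps))"
proof -
  have ms: "Metric_space UNIV d" and cm: "continuous_map euclideanreal (Metric_space.mtopology UNIV d) id"
    and ord: "\<And>x y z. x \<le> y \<Longrightarrow> y \<le> z \<Longrightarrow> max (d x y) (d y z) \<le> d x z"
    using assms(3) unfolding orderly_def by auto
  interpret Metric_space UNIV d by (rule ms)
  have sym: "\<And>x y. d x y = d y x" by (rule commute)
  have d0: "\<And>x. d x x = 0" by simp
  have dnn: "\<And>x y. d x y \<ge> 0" by simp
  have qi: "\<And>x y. x \<in> I \<Longrightarrow> y \<in> I \<Longrightarrow> d x y / M - eps \<le> d (f x) (f y) \<and> d (f x) (f y) \<le> M * d x y + eps"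
    using assms(6) unfolding qi_embedding_def by auto
  have M0: "M > 0" using assms(4) by simp
  have cont: "\<exists>e>0. \<forall>x. \<bar>x - s\<bar> < e \<longrightarrow> d s x < r" if "r > 0" for s r
  proof -
    have "\<forall>x\<in>topspace euclideanreal. \<forall>\<epsilon>>0. \<exists>U. openin euclideanreal U \<and> x \<in> U \<and> (\<forall>y\<in>U. id y \<in> mball (id x) \<epsilon>)"
      using cm continuous_map_to_metric by blast
    hence "\<exists>U. openin euclideanreal U \<and> s \<in> U \<and> (\<forall>y\<in>U. id y \<in> mball (id s) r)"
      using that by simp
    then obtain U where U: "open U" "s \<in> U" "\<And>y. y \<in> U \<Longrightarrow> d s y < r"
      by (metis in_mball id_apply open_openin)
    obtain e where e: "e > 0" "ball s e \<subseteq> U" using U(1,2) open_contains_ball by blast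
    have "d s x < r" if "\<bar>x - s\<bar> < e" for x
    proof -
      have "x \<in> ball s e" using that by (simp add: dist_real_def abs_minus_commute)
      thus ?thesis using e(2) U(3) by blast
    qed
    thus ?thesis using e(1) by blast
  qed
  have sub: "{v..w} \<subseteq> I" if "v \<in> I" "w \<in> I" for v w
  proof
    fix x assume "x \<in> {v..w}"
    thus "x \<in> I" using mem_is_interval_1_I[OF assms(1) that(1,2)] by simp
  qed
  have dens: "\<exists>t\<in>{v..w}. d c (f t) < eps + r"
    if vw: "v \<in> I" "w \<in> I" "v \<le> w" and c: "min (f v) (f w) \<le> c" "c \<le> max (f v) (f w)" and r: "r > 0"
    for v w c r
  proof -
    have qiv: "\<And>x y. x \<in> {v..w} \<Longrightarrow> y \<in> {v..w} \<Longrightarrow> d (f x) (f y) \<le> M * d x y + eps"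
      using qi sub[OF vw(1,2)] by blast
    show ?thesis
    proof (cases "f v \<le> f w")
      case True
      hence c': "f v \<le> c" "c \<le> f w" using c by auto
      show ?thesis
        by (rule G0[where dd=d and M=M, OF vw(3) c' cont sym sym d0 qiv ord M0 r assms(5)])
    next
      case False
      hence c': "- f v \<le> - c" "- c \<le> - f w" using c by auto
      have ord': "max (d (- x) (- y)) (d (- y) (- z)) \<le> d (- x) (- z)" if "x \<le> y" "y \<le> z" for x y z
        using ord[of "-z" "-y" "-x"] that sym by (simp add: max_def split: if_splits)
      have sym': "\<And>x y. d (-x) (-y) = d (-y) (-x)" by (rule sym)
      have d0': "\<And>x. d (-x) (-x) = 0" by (rule d0)
      have qiv': "\<And>x y. x \<in> {v..w} \<Longrightarrow> y \<in> {v..w} \<Longrightarrow> d (- (- f x)) (- (- f y)) \<le> M * d x y + eps"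
        using qiv by simp
      have "\<exists>t\<in>{v..w}. (\<lambda>x y. d (-x) (-y)) (-c) ((\<lambda>x. - f x) t) < eps + r"
        by (rule G0[where dd=d and M=M and D="\<lambda>x y. d (-x) (-y)" and g="\<lambda>x. - f x", OF vw(3) c' cont sym sym' d0' qiv' ord' M0 r assms(5)])
      then show ?thesis by simp
    qed
  qed
  define \<delta> where "\<delta> = 2 * eps * M"
  have K: False if u: "u \<in> I" "v \<in> I" "w \<in> I" "v \<le> w"
    and c: "min (f v) (f w) \<le> f u" "f u \<le> max (f v) (f w)"
    and far: "\<And>t. t \<in> {v..w} \<Longrightarrow> d u t \<ge> D" and D: "D > \<delta>" for u v w D
  proof -
    define r where "r = (D - \<delta>) / M"
    have r: "r > 0" using D M0 by (simp add: r_def)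
    obtain t where t: "t \<in> {v..w}" "d (f u) (f t) < eps + r" using dens[OF u(2-4) c r] by blast
    have tI: "t \<in> I" using t(1) sub[OF u(2,3)] by auto
    have "d u t / M - eps \<le> d (f u) (f t)" using qi[OF u(1) tI] by simp
    hence "d u t / M < 2 * eps + r" using t by simp
    hence "d u t < M * (2 * eps + r)" using M0 by (simp add: field_simps)
    also have "\<dots> = D" using M0 by (simp add: r_def \<delta>_def field_simps)
    finally show False using far[OF t(1)] by simp
  qed
  have neq: "f p \<noteq> f q" if "p \<in> I" "q \<in> I" "d p q > \<delta>" for p q
  proof
    assume "f p = f q"
    hence "d p q / M - eps \<le> 0" using qi[OF that(1,2)] by simp
    hence "d p q \<le> M * eps" using M0 by (simp add: field_simps)
    moreover have "M * eps \<le> 2 * eps * M" using assms(5) M0 by simp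
    ultimately show False using that(3) unfolding \<delta>_def by (simp add: mult.commute)
  qed
  have E1: "(f p < f q) = (f p < f q')"
    if "p \<in> I" "q \<in> I" "q' \<in> I" "p < q" "q \<le> q'" "d p q > \<delta>" for p q q'
  proof -
    have "d p q' > \<delta>" using ord[of p q q'] that by simp
    hence n1: "f p \<noteq> f q'" using neq that by blast
    have n2: "f p \<noteq> f q" using neq that by blast
    show ?thesis
    proof (rule ccontr)
      assume "(f p < f q) \<noteq> (f p < f q')"
      hence "min (f q) (f q') \<le> f p" "f p \<le> max (f q) (f q')" using n1 n2 by auto
      moreover have "d p t \<ge> d p q" if "t \<in> {q..q'}" for t
        using ord[of p q t] that \<open>p < q\<close> by simp
      ultimately show False using K[of p q q' "d p q"] that by auto
    qed
  qed
  have E2: "(f p < f q) = (f p' < f q)"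
    if "p \<in> I" "q \<in> I" "p' \<in> I" "p < q" "p' \<le> p" "d p q > \<delta>" for p q p'
  proof -
    have "d p' q > \<delta>" using ord[of p' p q] that by simp
    hence n1: "f p' \<noteq> f q" using neq that by blast
    have n2: "f p \<noteq> f q" using neq that by blast
    show ?thesis
    proof (rule ccontr)
      assume "(f p < f q) \<noteq> (f p' < f q)"
      hence "min (f p') (f p) \<le> f q" "f q \<le> max (f p') (f p)" using n1 n2 by auto
      moreover have "d q t \<ge> d p q" if "t \<in> {p'..p}" for t
        using ord[of t p q] that sym[of q t] \<open>p < q\<close> by simp
      ultimately show False using K[of q p' p "d p q"] that by auto
    qed
  qed
  have nest: "(f p < f q) = (f p' < f q')"
    if "p \<in> I" "q \<in> I" "p' \<in> I" "q' \<in> I" "p' \<le> p" "p < q" "q \<le> q'" "d p q > \<delta>" for p q p' q'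
  proof -
    have "d p q' > \<delta>" using ord[of p q q'] that by simp
    thus ?thesis using E1[of p q q'] E2[of p q' p'] that by auto
  qed
  have part1: "delta_monotone d \<delta> I f"
  proof (cases "\<exists>a\<in>I. \<exists>b\<in>I. a < b \<and> d a b > \<delta> \<and> f a < f b")
    case True
    then obtain a b where ab: "a \<in> I" "b \<in> I" "a < b" "d a b > \<delta>" "f a < f b" by blast
    have "f a' < f b'" if "a' \<in> I" "b' \<in> I" "a' < b'" "d a' b' > \<delta>" for a' b'
    proof -
      have lo: "min a a' \<in> I" "max b b' \<in> I" using ab that by (auto simp: min_def max_def)
      have "(f a < f b) = (f (min a a') < f (max b b'))" using nest[of a b "min a a'" "max b b'"] ab lo by auto
      moreover have "(f a' < f b') = (f (min a a') < f (max b b'))" using nest[of a' b' "min a a'" "max b b'"] that lo by auto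
      ultimately show ?thesis using ab by simp
    qed
    then show ?thesis unfolding delta_monotone_def by blast
  next
    case False
    have "f a > f b" if "a \<in> I" "b \<in> I" "a < b" "d a b > \<delta>" for a b
      using False neq[of a b] that by force
    then show ?thesis unfolding delta_monotone_def by blast
  qed
  have part2: "(INF x\<in>{a..b}. d y (f x)) \<le> eps"
    if ab: "a \<in> I" "b \<in> I" "a \<le> b" "y \<in> {f a..f b}" for a b y
  proof (rule field_le_epsilon)
    fix r :: real assume r: "r > 0"
    obtain t where t: "t \<in> {a..b}" "d y (f t) < eps + r"
      using dens[of a b y r] ab r by auto
    have "(INF x\<in>{a..b}. d y (f x)) \<le> d y (f t)"
      by (rule cINF_lower[OF _ t(1)]) (auto intro: bdd_belowI[of _ 0])
    thus "(INF x\<in>{a..b}. d y (f x)) \<le> eps + r" using t by simp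
  qed
  show ?thesis using part1 part2 unfolding \<delta>_def by blast
qed

end
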